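(* Let $q\ge2$, $n\ge2$, $X=\{0,\ldots,q-1\}$, and let $\mathcal{L}=\{L_1,\ldots,L_k\}$ be a partition of $X^n$ with respect to which the Insect Markov chain on $X^n$ is lumpable. For each $i$ let $L_i'\subseteq X^{n-1}$ be the set of words obtained by deleting the last letter from the elements of $L_i$. If $L_i'\cap L_j'\neq\emptyset$ for some indices $i,j$, then $L_i'=L_j'$.
   Context: For $x,y\in X^n$, $d(x,y)=n-\max\{m\in\{0,\ldots,n\}: x_1\cdots x_m=y_1\cdots y_m\}$. Set $\alpha_j=\frac{q^j-1}{q^{j+1}-1}$ for $1\le j\le n-1$ and $\alpha_n=0$. The Insect Markov chain on $X^n$ has transition probabilities: if $d(x,y)\in\{0,1\}$, $p(x,y)=q^{-1}(1-\alpha_1)+\sum_{i=2}^nq^{-i}\alpha_1\cdots\alpha_{i-1}(1-\alpha_i)$; if $d(x,y)=j>1$, $p(x,y)=\sum_{i=j}^nq^{-i}\alpha_1\cdots\alpha_{i-1}(1-\alpha_i)$. A chain is lumpable with respect to a partition if for all parts $L,L'$ the map $x\mapsto\sum_{y\in L'}p(x,y)$ is constant on $L$. *)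

theory Defs
  imports Complex_Main "HOL-Library.Disjoint_Sets"
begin

definition words :: "nat \<Rightarrow> nat \<Rightarrow> nat list set" where
  "words q n = {x. length x = n \<and> (\<forall>a\<in>set x. a < q)}"

definition insect_dist :: "nat \<Rightarrow> nat list \<Rightarrow> nat list \<Rightarrow> nat" where
  "insect_dist n x y = n - (GREATEST m. m \<le> n \<and> take m x = take m y)"

definition insect_alpha :: "nat \<Rightarrow> nat \<Rightarrow> nat \<Rightarrow> real" where
  "insect_alpha q n j = (if j = n then 0 else (real q ^ j - 1) / (real q ^ (j + 1) - 1))"

definition insect_p :: "nat \<Rightarrow> nat \<Rightarrow> nat list \<Rightarrow> nat list \<Rightarrow> real" where
  "insect_p q n x y =
     (let a = insect_alpha q n; j = insect_dist n x y in
      if j \<in> {0, 1} then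
        (1 / real q) * (1 - a 1)
        + (\<Sum>i = 2..n. (1 / real q ^ i) * (\<Prod>l = 1..<i. a l) * (1 - a i))
      else
        (\<Sum>i = j..n. (1 / real q ^ i) * (\<Prod>l = 1..<i. a l) * (1 - a i)))"

definition insect_lumpable :: "nat \<Rightarrow> nat \<Rightarrow> nat list set set \<Rightarrow> bool" where
  "insect_lumpable q n P \<longleftrightarrow>
     (\<forall>L\<in>P. \<forall>L'\<in>P. \<forall>x\<in>L. \<forall>y\<in>L.
        (\<Sum>z\<in>L'. insect_p q n x z) = (\<Sum>z\<in>L'. insect_p q n y z))"

end

theory Submission
  imports Defs
begin
lemma words_eq: "words q k = {xs. set xs \<subseteq> {..<q} \<and> length xs = k}"
  unfolding words_def by auto

lemma finite_words: "finite (words q k)"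
  unfolding words_eq by (rule finite_lists_length_eq) simp

lemma card_words: "card (words q k) = q ^ k"
  unfolding words_eq by (simp add: card_lists_length_eq)

lemma card_ext:
  assumes x: "x \<in> words q n" and m: "m \<le> n"
  shows "card {z \<in> words q n. take m z = take m x} = q ^ (n - m)"
proof -
  have "bij_betw (drop m) {z \<in> words q n. take m z = take m x} (words q (n - m))"
  proof (rule bij_betw_imageI)
    show "inj_on (drop m) {z \<in> words q n. take m z = take m x}"
    proof (rule inj_onI)
      fix a b assume a: "a \<in> {z \<in> words q n. take m z = take m x}"
        and b: "b \<in> {z \<in> words q n. take m z = take m x}" and ab: "drop m a = drop m b"
      have "take m a = take m b" using a b by simp
      then have "take m a @ drop m a = take m b @ drop m b" using ab by simp
      then show "a = b" by simp
    qed
    show "drop m ` {z \<in> words q n. take m z = take m x} = words q (n - m)"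
    proof
      show "drop m ` {z \<in> words q n. take m z = take m x} \<subseteq> words q (n - m)"
        unfolding words_def by (auto dest: in_set_dropD)
    next
      show "words q (n - m) \<subseteq> drop m ` {z \<in> words q n. take m z = take m x}"
      proof
        fix w assume w: "w \<in> words q (n - m)"
        have lx: "length (take m x) = m" using x m by (simp add: words_def)
        have "take m x @ w \<in> {z \<in> words q n. take m z = take m x}"
          using w x m lx by (auto simp: words_def dest: in_set_takeD)
        moreover have "drop m (take m x @ w) = w" using lx by simp
        ultimately show "w \<in> drop m ` {z \<in> words q n. take m z = take m x}"
          by (metis image_eqI)
      qed
    qed
  qed
  then have "card {z \<in> words q n. take m z = take m x} = card (words q (n - m))"
    by (rule bij_betw_same_card)
  then show ?thesis by (simp add: card_words)
qed

lemma dist_le: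
  assumes "length x = n" "length z = n"
  shows "insect_dist n x z \<le> i \<longleftrightarrow> take (n - i) x = take (n - i) z"
proof -
  let ?G = "GREATEST m. m \<le> n \<and> take m x = take m z"
  have ex: "?G \<le> n \<and> take ?G x = take ?G z"
    by (rule GreatestI_nat[where k=0]) auto
  have bd: "\<And>m. m \<le> n \<and> take m x = take m z \<Longrightarrow> m \<le> ?G"
    by (rule Greatest_le_nat[where b=n]) auto
  show ?thesis
  proof
    assume "insect_dist n x z \<le> i"
    then have le: "n - i \<le> ?G" unfolding insect_dist_def by simp
    show "take (n - i) x = take (n - i) z"
    proof -
      have "take (n - i) x = take (n - i) (take ?G x)" using le by (simp add: min_def)
      also have "\<dots> = take (n - i) (take ?G z)" using ex by simp
      also have "\<dots> = take (n - i) z" using le by (simp add: min_def)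
      finally show ?thesis .
    qed
  next
    assume "take (n - i) x = take (n - i) z"
    then have "n - i \<le> ?G" using bd by simp
    then show "insect_dist n x z \<le> i" unfolding insect_dist_def by simp
  qed
qed

definition cc :: "nat \<Rightarrow> nat \<Rightarrow> nat \<Rightarrow> real" where
  "cc q n i = (1 / real q ^ i) * (\<Prod>l = 1..<i. insect_alpha q n l) * (1 - insect_alpha q n i)"

lemma p_formula:
  assumes "length x = n" "length z = n" "n \<ge> 1"
  shows "insect_p q n x z = (\<Sum>i\<in>{1..n}. if take (n - i) x = take (n - i) z then cc q n i else 0)"
proof -
  let ?d = "insect_dist n x z"
  have ind: "\<And>i. (take (n - i) x = take (n - i) z) = (?d \<le> i)"
    using dist_le[OF assms(1,2)] by simp
  have dn: "?d \<le> n" unfolding insect_dist_def by simp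
  show ?thesis
  proof (cases "?d \<in> {0,1}")
    case True
    then have "(\<Sum>i\<in>{1..n}. if take (n - i) x = take (n - i) z then cc q n i else 0)
        = (\<Sum>i\<in>{1..n}. cc q n i)" unfolding ind by (intro sum.cong) auto
    also have "\<dots> = cc q n 1 + (\<Sum>i\<in>{2..n}. cc q n i)"
      using assms(3) by (simp add: sum.atLeast_Suc_atMost numeral_2_eq_2)
    finally show ?thesis using True unfolding insect_p_def cc_def Let_def by simp
  next
    case False
    then have d2: "?d \<ge> 2" by auto
    have "(\<Sum>i\<in>{1..n}. if take (n - i) x = take (n - i) z then cc q n i else 0)
        = (\<Sum>i\<in>{i\<in>{1..n}. ?d \<le> i}. cc q n i)" unfolding ind
      by (rule sum.inter_filter[symmetric]) simp
    also have "{i\<in>{1..n}. ?d \<le> i} = {?d..n}" using d2 by auto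
    finally show ?thesis using False unfolding insect_p_def cc_def Let_def by simp
  qed
qed

lemma alpha_bounds:
  assumes "q \<ge> 2" "1 \<le> l" "l < n"
  shows "0 < insect_alpha q n l" "insect_alpha q n l < 1"
proof -
  have a: "real q ^ l > 1" using assms by (simp add: one_less_power)
  have b: "real q ^ (l+1) > real q ^ l" using assms by (simp add: power_strict_increasing)
  have eq: "insect_alpha q n l = (real q ^ l - 1) / (real q ^ (l+1) - 1)"
    using assms by (simp add: insect_alpha_def)
  have A: "real q ^ l - 1 > 0" using a by simp
  have B: "real q ^ l - 1 < real q ^ (l+1) - 1" using b by simp
  show "0 < insect_alpha q n l" unfolding eq using A B by (intro divide_pos_pos) auto
  show "insect_alpha q n l < 1" unfolding eq using A B by (subst divide_less_eq_1_pos) auto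
qed

lemma cc_pos:
  assumes "q \<ge> 2" "1 \<le> i" "i \<le> n"
  shows "cc q n i > 0"
proof -
  have "(\<Prod>l = 1..<i. insect_alpha q n l) > 0"
    using alpha_bounds(1)[OF assms(1)] assms by (intro prod_pos) auto
  moreover have "1 - insect_alpha q n i > 0"
    using alpha_bounds(2)[OF assms(1)] assms by (cases "i = n") (auto simp: insect_alpha_def)
  moreover have "1 / real q ^ i > 0" using assms by simp
  ultimately show ?thesis unfolding cc_def by simp
qed

locale ins =
  fixes q n :: nat and P :: "nat list set set"
  assumes q2: "q \<ge> 2" and n2: "n \<ge> 2"
    and part: "partition_on (words q n) P"
    and lump: "insect_lumpable q n P"
begin

abbreviation "V \<equiv> words q n"

definition R :: "nat \<Rightarrow> (nat list \<Rightarrow> real) \<Rightarrow> nat list \<Rightarrow> real" where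
  "R k g x = (\<Sum>z\<in>V. if take (n - k) z = take (n - k) x then g z else 0) / real q ^ k"

definition Pop :: "(nat list \<Rightarrow> real) \<Rightarrow> nat list \<Rightarrow> real" where
  "Pop g x = (\<Sum>z\<in>V. insect_p q n x z * g z)"

definition W :: "(nat list \<Rightarrow> real) set" where
  "W = {g. \<forall>L\<in>P. \<forall>x\<in>L. \<forall>y\<in>L. g x = g y}"

definition w :: "nat \<Rightarrow> real" where "w i = cc q n i * real q ^ i"

definition lam :: "nat \<Rightarrow> real" where "lam m = (\<Sum>i\<in>{1..m}. w i)"

lemma finV: "finite V" by (rule finite_words)

lemma qpos: "real q > 0" using q2 by simp

lemma w_pos: "1 \<le> i \<Longrightarrow> i \<le> n \<Longrightarrow> w i > 0"
  unfolding w_def using cc_pos[OF q2] qpos by simp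

lemma lam_pos: "1 \<le> m \<Longrightarrow> m \<le> n \<Longrightarrow> lam m > 0"
  unfolding lam_def using w_pos by (intro sum_pos) auto

lemma lenV: "x \<in> V \<Longrightarrow> length x = n" by (simp add: words_def)

lemma R_sum: "x \<in> V \<Longrightarrow> real q ^ k * R k g x = (\<Sum>z\<in>V. if take (n - k) z = take (n - k) x then g z else 0)"
  unfolding R_def using qpos by simp

lemma take_mono_eq: "a \<le> b \<Longrightarrow> take b u = take b v \<Longrightarrow> take a u = take a v"
proof -
  assume ab: "a \<le> b" and e: "take b u = take b v"
  have "take a u = take a (take b u)" using ab by (simp add: min_def)
  also have "\<dots> = take a (take b v)" using e by simp
  also have "\<dots> = take a v" using ab by (simp add: min_def)
  finally show ?thesis .
qed

lemma R_comp_le: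
  assumes x: "x \<in> V" and jk: "j \<le> k" and kn: "k \<le> n"
  shows "R j (R k g) x = R k g x"
proof -
  have "(\<Sum>z\<in>V. if take (n - j) z = take (n - j) x then R k g z else 0)
      = (\<Sum>z\<in>V. if take (n - j) z = take (n - j) x then R k g x else 0)"
  proof (rule sum.cong)
    fix z assume "z \<in> V"
    show "(if take (n - j) z = take (n - j) x then R k g z else 0) =
          (if take (n - j) z = take (n - j) x then R k g x else 0)"
    proof (cases "take (n - j) z = take (n - j) x")
      case True
      then have "take (n - k) z = take (n - k) x" using jk
        by (intro take_mono_eq[of "n - k" "n - j"]) auto
      then show ?thesis unfolding R_def by simp
    qed simp
  qed simp
  also have "\<dots> = (\<Sum>z\<in>{z\<in>V. take (n - j) z = take (n - j) x}. R k g x)"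
    by (rule sum.inter_filter[symmetric, OF finV])
  also have "\<dots> = real q ^ j * R k g x"
    using card_ext[OF x, of "n - j"] jk kn by simp
  finally show ?thesis unfolding R_def[of j] using qpos by simp
qed

lemma R_comp_gt:
  assumes x: "x \<in> V" and jk: "k < j" and jn: "j \<le> n"
  shows "R j (R k g) x = R j g x"
proof -
  have "real q ^ j * (real q ^ k * R j (R k g) x)
      = real q ^ k * (\<Sum>z\<in>V. if take (n - j) z = take (n - j) x then R k g z else 0)"
    using R_sum[OF x, of j "R k g"] by simp
  also have "\<dots> = (\<Sum>z\<in>V. if take (n - j) z = take (n - j) x then real q ^ k * R k g z else 0)"
    by (subst sum_distrib_left) (rule sum.cong, auto)
  also have "\<dots> = (\<Sum>z\<in>V. \<Sum>y\<in>V. if take (n - j) z = take (n - j) x \<and> take (n - k) y = take (n - k) z then g y else 0)"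
  proof (rule sum.cong)
    fix z assume z: "z \<in> V"
    show "(if take (n - j) z = take (n - j) x then real q ^ k * R k g z else 0) =
      (\<Sum>y\<in>V. if take (n - j) z = take (n - j) x \<and> take (n - k) y = take (n - k) z then g y else 0)"
    proof (cases "take (n - j) z = take (n - j) x")
      case True
      then show ?thesis unfolding R_sum[OF z] by simp
    qed simp
  qed simp
  also have "\<dots> = (\<Sum>y\<in>V. \<Sum>z\<in>V. if take (n - j) z = take (n - j) x \<and> take (n - k) y = take (n - k) z then g y else 0)"
    by (rule sum.swap)
  also have "\<dots> = (\<Sum>y\<in>V. if take (n - j) y = take (n - j) x then real q ^ k * g y else 0)"
  proof (rule sum.cong)
    fix y assume y: "y \<in> V"
    have tk: "\<And>z. take (n - k) y = take (n - k) z \<Longrightarrow> take (n - j) z = take (n - j) y"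
      using jk by (intro take_mono_eq[of "n - j" "n - k"]) auto
    show "(\<Sum>z\<in>V. if take (n - j) z = take (n - j) x \<and> take (n - k) y = take (n - k) z then g y else 0)
       = (if take (n - j) y = take (n - j) x then real q ^ k * g y else 0)"
    proof (cases "take (n - j) y = take (n - j) x")
      case True
      have "(\<Sum>z\<in>V. if take (n - j) z = take (n - j) x \<and> take (n - k) y = take (n - k) z then g y else 0)
          = (\<Sum>z\<in>V. if take (n - k) z = take (n - k) y then g y else 0)"
      proof (rule sum.cong)
        fix z assume "z \<in> V"
        show "(if take (n - j) z = take (n - j) x \<and> take (n - k) y = take (n - k) z then g y else 0)
          = (if take (n - k) z = take (n - k) y then g y else 0)"
        proof (cases "take (n - k) z = take (n - k) y")
          case True2: True
          then have "take (n - j) z = take (n - j) x" using tk[of z] True by simp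
          then show ?thesis using True2 by simp
        qed auto
      qed simp
      also have "\<dots> = (\<Sum>z\<in>{z\<in>V. take (n - k) z = take (n - k) y}. g y)"
        by (rule sum.inter_filter[symmetric, OF finV])
      also have "\<dots> = real q ^ k * g y"
        using card_ext[OF y, of "n - k"] jk jn by simp
      finally show ?thesis using True by simp
    next
      case False
      have nz: "\<And>z. \<not> (take (n - j) z = take (n - j) x \<and> take (n - k) y = take (n - k) z)"
        using tk False by metis
      have "\<forall>z\<in>V. (if take (n - j) z = take (n - j) x \<and> take (n - k) y = take (n - k) z then g y else 0) = 0"
      proof
        fix z show "(if take (n - j) z = take (n - j) x \<and> take (n - k) y = take (n - k) z then g y else 0) = 0"
          using nz[of z] by (rule if_not_P)
      qed
      then show ?thesis using False by (simp only: sum.neutral if_False)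
    qed
  qed simp
  also have "\<dots> = real q ^ k * (\<Sum>y\<in>V. if take (n - j) y = take (n - j) x then g y else 0)"
    by (subst sum_distrib_left) (rule sum.cong, auto)
  also have "\<dots> = real q ^ k * (real q ^ j * R j g x)"
    unfolding R_sum[OF x] ..
  finally show ?thesis using qpos by simp
qed

lemma R_comp:
  assumes "x \<in> V" "j \<le> n" "k \<le> n"
  shows "R j (R k g) x = R (max j k) g x"
  using R_comp_le[OF assms(1)] R_comp_gt[OF assms(1)] assms
  by (cases "j \<le> k") (auto simp: max_def)

lemma Pop_R:
  assumes x: "x \<in> V"
  shows "Pop g x = (\<Sum>i\<in>{1..n}. w i * R i g x)"
proof -
  have "Pop g x = (\<Sum>z\<in>V. \<Sum>i\<in>{1..n}. if take (n - i) z = take (n - i) x then cc q n i * g z else 0)"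
    unfolding Pop_def
  proof (rule sum.cong)
    fix z assume z: "z \<in> V"
    have "insect_p q n x z = (\<Sum>i\<in>{1..n}. if take (n - i) x = take (n - i) z then cc q n i else 0)"
      using p_formula[OF lenV[OF x] lenV[OF z]] n2 by simp
    then show "insect_p q n x z * g z = (\<Sum>i\<in>{1..n}. if take (n - i) z = take (n - i) x then cc q n i * g z else 0)"
      by (simp only: sum_distrib_right) (rule sum.cong, auto)
  qed simp
  also have "\<dots> = (\<Sum>i\<in>{1..n}. \<Sum>z\<in>V. if take (n - i) z = take (n - i) x then cc q n i * g z else 0)"
    by (rule sum.swap)
  also have "\<dots> = (\<Sum>i\<in>{1..n}. w i * R i g x)"
  proof (rule sum.cong)
    fix i
    have "(\<Sum>z\<in>V. if take (n - i) z = take (n - i) x then cc q n i * g z else 0)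
        = cc q n i * (\<Sum>z\<in>V. if take (n - i) z = take (n - i) x then g z else 0)"
      by (subst sum_distrib_left) (rule sum.cong, auto)
    also have "\<dots> = cc q n i * (real q ^ i * R i g x)" unfolding R_sum[OF x] ..
    finally show "(\<Sum>z\<in>V. if take (n - i) z = take (n - i) x then cc q n i * g z else 0) = w i * R i g x"
      unfolding w_def by simp
  qed simp
  finally show ?thesis .
qed

lemma P_sub: "L \<in> P \<Longrightarrow> L \<subseteq> V"
  using part unfolding partition_on_def by auto

lemma finP: "finite P"
proof -
  have "P \<subseteq> Pow V" using P_sub by auto
  then show ?thesis using finV by (meson finite_Pow_iff finite_subset)
qed

lemma V_Union: "V = \<Union>P" using part unfolding partition_on_def by auto

lemma P_disj: "L \<in> P \<Longrightarrow> L' \<in> P \<Longrightarrow> L \<noteq> L' \<Longrightarrow> L \<inter> L' = {}"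
  using part unfolding partition_on_def disjoint_def by auto

lemma Pop_W:
  assumes g: "g \<in> W"
  shows "Pop g \<in> W"
  unfolding W_def
proof (intro CollectI ballI)
  fix L x y assume L: "L \<in> P" and x: "x \<in> L" and y: "y \<in> L"
  have key: "\<And>u. u \<in> L \<Longrightarrow> Pop g u = (\<Sum>L'\<in>P. g (SOME z. z \<in> L') * (\<Sum>z\<in>L'. insect_p q n u z))"
  proof -
    fix u assume u: "u \<in> L"
    have "Pop g u = (\<Sum>L'\<in>P. \<Sum>z\<in>L'. insect_p q n u z * g z)"
    proof -
      have fin: "\<forall>A\<in>P. finite A" using P_sub finV finite_subset by blast
      have dis: "\<forall>A\<in>P. \<forall>B\<in>P. A \<noteq> B \<longrightarrow> A \<inter> B = {}" using P_disj by blast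
      show ?thesis unfolding Pop_def V_Union
        using sum.Union_disjoint[OF fin dis, of "\<lambda>z. insect_p q n u z * g z"] by simp
    qed
    also have "\<dots> = (\<Sum>L'\<in>P. g (SOME z. z \<in> L') * (\<Sum>z\<in>L'. insect_p q n u z))"
    proof (rule sum.cong)
      fix L' assume L': "L' \<in> P"
      have gc: "\<forall>a\<in>L'. \<forall>b\<in>L'. g a = g b" using g L' unfolding W_def by blast
      have "(\<Sum>z\<in>L'. insect_p q n u z * g z) = (\<Sum>z\<in>L'. g (SOME z. z \<in> L') * insect_p q n u z)"
      proof (rule sum.cong)
        fix z assume z: "z \<in> L'"
        have "(SOME z. z \<in> L') \<in> L'" using z by (rule someI)
        then have "g z = g (SOME z. z \<in> L')" using gc z by blast
        then show "insect_p q n u z * g z = g (SOME z. z \<in> L') * insect_p q n u z" by simp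
      qed simp
      then show "(\<Sum>z\<in>L'. insect_p q n u z * g z) = g (SOME z. z \<in> L') * (\<Sum>z\<in>L'. insect_p q n u z)"
        by (simp only: sum_distrib_left)
    qed simp
    finally show "Pop g u = (\<Sum>L'\<in>P. g (SOME z. z \<in> L') * (\<Sum>z\<in>L'. insect_p q n u z))" .
  qed
  have "\<And>L'. L' \<in> P \<Longrightarrow> (\<Sum>z\<in>L'. insect_p q n x z) = (\<Sum>z\<in>L'. insect_p q n y z)"
  proof -
    fix L' assume L': "L' \<in> P"
    have "\<forall>L\<in>P. \<forall>L'\<in>P. \<forall>x\<in>L. \<forall>y\<in>L. (\<Sum>z\<in>L'. insect_p q n x z) = (\<Sum>z\<in>L'. insect_p q n y z)"
      using lump unfolding insect_lumpable_def .
    then show "(\<Sum>z\<in>L'. insect_p q n x z) = (\<Sum>z\<in>L'. insect_p q n y z)"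
      using L L' x y by blast
  qed
  then show "Pop g x = Pop g y" unfolding key[OF x] key[OF y] by (intro sum.cong refl) simp
qed

lemma Pop_lin:
  "Pop (\<lambda>z. g z - h z + (\<Sum>j\<in>J. d j * k j z)) x = Pop g x - Pop h x + (\<Sum>j\<in>J. d j * Pop (k j) x)"
proof -
  have "Pop (\<lambda>z. g z - h z + (\<Sum>j\<in>J. d j * k j z)) x
     = Pop g x - Pop h x + (\<Sum>z\<in>V. \<Sum>j\<in>J. d j * (insect_p q n x z * k j z))"
    unfolding Pop_def by (simp add: algebra_simps sum.distrib sum_subtractf sum_distrib_left)
  also have "(\<Sum>z\<in>V. \<Sum>j\<in>J. d j * (insect_p q n x z * k j z)) = (\<Sum>j\<in>J. d j * Pop (k j) x)"
    unfolding Pop_def by (subst sum.swap) (simp add: sum_distrib_left)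
  finally show ?thesis .
qed

lemma Pop_cong: "(\<And>z. z \<in> V \<Longrightarrow> g z = h z) \<Longrightarrow> Pop g x = Pop h x"
  unfolding Pop_def by simp

lemma swap_tri:
  "(\<Sum>j\<in>{k<..n}. \<Sum>i\<in>{j<..n}. F j i) = (\<Sum>i\<in>{k<..n}. \<Sum>j\<in>{k<..<i}. (F j i :: real))"
proof -
  have "(\<Sum>j\<in>{k<..n}. \<Sum>i\<in>{j<..n}. F j i) = (\<Sum>j\<in>{k<..n}. \<Sum>i\<in>{i. i \<in> {k<..n} \<and> j < i}. F j i)"
    by (rule sum.cong) (auto intro!: sum.cong)
  also have "\<dots> = (\<Sum>i\<in>{k<..n}. \<Sum>j\<in>{j. j \<in> {k<..n} \<and> j < i}. F j i)"
    by (rule sum.swap_restrict) auto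
  also have "\<dots> = (\<Sum>i\<in>{k<..n}. \<Sum>j\<in>{k<..<i}. F j i)"
    by (rule sum.cong) (auto intro!: sum.cong)
  finally show ?thesis .
qed

lemma Pop_Rj:
  assumes x: "x \<in> V" and j: "1 \<le> j" "j \<le> n"
  shows "Pop (R j g) x = lam j * R j g x + (\<Sum>i\<in>{j<..n}. w i * R i g x)"
proof -
  have "Pop (R j g) x = (\<Sum>i\<in>{1..n}. w i * R (max i j) g x)"
    unfolding Pop_R[OF x] by (rule sum.cong) (use R_comp[OF x] j in auto)
  also have "{1..n} = {1..j} \<union> {j<..n}" using j by auto
  also have "(\<Sum>i\<in>{1..j} \<union> {j<..n}. w i * R (max i j) g x)
      = (\<Sum>i\<in>{1..j}. w i * R (max i j) g x) + (\<Sum>i\<in>{j<..n}. w i * R (max i j) g x)"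
    by (rule sum.union_disjoint) auto
  also have "(\<Sum>i\<in>{1..j}. w i * R (max i j) g x) = lam j * R j g x"
    unfolding lam_def sum_distrib_right by (rule sum.cong) auto
  also have "(\<Sum>i\<in>{j<..n}. w i * R (max i j) g x) = (\<Sum>i\<in>{j<..n}. w i * R i g x)"
    by (rule sum.cong) auto
  finally show ?thesis .
qed

lemma Pop_R1:
  assumes x: "x \<in> V"
  shows "Pop (R 1 g) x = Pop g x"
  unfolding Pop_R[OF x] by (rule sum.cong) (use R_comp[OF x] in auto)

lemma PopT_expand:
  assumes x: "x \<in> V"
  shows "Pop g x - Pop (R 1 g) x + (\<Sum>j\<in>{k<..n}. d j * Pop (R j g) x)
     = (\<Sum>j\<in>{k<..n}. d j * lam j * R j g x) + (\<Sum>i\<in>{k<..n}. w i * (\<Sum>j\<in>{k<..<i}. d j) * R i g x)"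
proof -
  have "(\<Sum>j\<in>{k<..n}. d j * Pop (R j g) x)
      = (\<Sum>j\<in>{k<..n}. d j * lam j * R j g x + (\<Sum>i\<in>{j<..n}. d j * (w i * R i g x)))"
  proof (rule sum.cong[OF refl])
    fix j assume "j \<in> {k<..n}"
    then have "1 \<le> j" "j \<le> n" by auto
    then show "d j * Pop (R j g) x = d j * lam j * R j g x + (\<Sum>i\<in>{j<..n}. d j * (w i * R i g x))"
      unfolding Pop_Rj[OF x \<open>1 \<le> j\<close> \<open>j \<le> n\<close>] by (simp only: distrib_left sum_distrib_left mult.assoc)
  qed
  also have "\<dots> = (\<Sum>j\<in>{k<..n}. d j * lam j * R j g x) + (\<Sum>j\<in>{k<..n}. \<Sum>i\<in>{j<..n}. d j * (w i * R i g x))"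
    by (rule sum.distrib)
  also have "(\<Sum>j\<in>{k<..n}. \<Sum>i\<in>{j<..n}. d j * (w i * R i g x))
       = (\<Sum>i\<in>{k<..n}. \<Sum>j\<in>{k<..<i}. d j * (w i * R i g x))"
    by (rule swap_tri)
  also have "\<dots> = (\<Sum>i\<in>{k<..n}. w i * (\<Sum>j\<in>{k<..<i}. d j) * R i g x)"
  proof (rule sum.cong[OF refl])
    fix i
    have "w i * (\<Sum>j\<in>{k<..<i}. d j) * R i g x = (\<Sum>j\<in>{k<..<i}. d j) * (w i * R i g x)"
      by (simp only: mult_ac)
    then show "(\<Sum>j\<in>{k<..<i}. d j * (w i * R i g x)) = w i * (\<Sum>j\<in>{k<..<i}. d j) * R i g x"
      by (simp only: sum_distrib_right)
  qed
  finally have A: "(\<Sum>j\<in>{k<..n}. d j * Pop (R j g) x) = (\<Sum>j\<in>{k<..n}. d j * lam j * R j g x) + (\<Sum>i\<in>{k<..n}. w i * (\<Sum>j\<in>{k<..<i}. d j) * R i g x)" .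
  show ?thesis unfolding A Pop_R1[OF x] by simp
qed

lemma coef_alg:
  fixes l :: real and S :: "nat \<Rightarrow> real"
  assumes l: "l \<noteq> 0"
  shows "(\<Sum>j\<in>K. d j * R j g x) - ((\<Sum>j\<in>K. d j * lam j * R j g x) + (\<Sum>i\<in>K. w i * S i * R i g x)) / l
    = (\<Sum>m\<in>K. (d m * (1 - lam m / l) - w m * S m / l) * R m g x)"
proof -
  have "(\<Sum>m\<in>K. (d m * (1 - lam m / l) - w m * S m / l) * R m g x)
      = (\<Sum>m\<in>K. d m * R m g x - (d m * lam m * R m g x + w m * S m * R m g x) / l)"
  proof (rule sum.cong[OF refl])
    fix m
    show "(d m * (1 - lam m / l) - w m * S m / l) * R m g x = d m * R m g x - (d m * lam m * R m g x + w m * S m * R m g x) / l"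
      using l by (simp add: field_simps)
  qed
  also have "\<dots> = (\<Sum>m\<in>K. d m * R m g x) - (\<Sum>m\<in>K. d m * lam m * R m g x + w m * S m * R m g x) / l"
    by (simp only: sum_subtractf sum_divide_distrib)
  also have "(\<Sum>m\<in>K. d m * lam m * R m g x + w m * S m * R m g x) = (\<Sum>j\<in>K. d j * lam j * R j g x) + (\<Sum>i\<in>K. w i * S i * R i g x)"
    by (rule sum.distrib)
  finally show ?thesis by simp
qed

lemma W_comb:
  assumes f: "f \<in> W" and h: "h \<in> W"
  shows "(\<lambda>x. f x - h x / l) \<in> W"
proof -
  have f': "\<forall>L\<in>P. \<forall>x\<in>L. \<forall>y\<in>L. f x = f y" using f unfolding W_def by (rule CollectD)
  have h': "\<forall>L\<in>P. \<forall>x\<in>L. \<forall>y\<in>L. h x = h y" using h unfolding W_def by (rule CollectD)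
  have "\<forall>L\<in>P. \<forall>x\<in>L. \<forall>y\<in>L. f x - h x / l = f y - h y / l"
  proof (intro ballI)
    fix L a b assume L: "L \<in> P" "a \<in> L" "b \<in> L"
    have e1: "f a = f b" using f' L by blast
    have e2: "h a = h b" using h' L by blast
    show "f a - h a / l = f b - h b / l" unfolding e1 e2 ..
  qed
  then show ?thesis unfolding W_def mem_Collect_eq .
qed

lemma T_ex:
  "k \<le> n \<Longrightarrow> \<exists>T d. (\<forall>g\<in>W. T g \<in> W) \<and>
     (\<forall>g. \<forall>x\<in>V. T g x = g x - R 1 g x + (\<Sum>j\<in>{k<..n}. d j * R j g x))"
proof (induction k)
  case 0
  have "\<And>g x. (\<Sum>j\<in>{0<..n}. (if j = 1 then 1 else 0) * R j g x) = R 1 g x"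
  proof -
    fix g x
    have "(\<Sum>j\<in>{0<..n}. (if j = 1 then 1 else 0) * R j g x) = (\<Sum>j\<in>{0<..n}. if j = 1 then R j g x else 0)"
      by (rule sum.cong) auto
    also have "\<dots> = R 1 g x" using n2 by (subst sum.delta) auto
    finally show "(\<Sum>j\<in>{0<..n}. (if j = 1 then 1 else 0) * R j g x) = R 1 g x" .
  qed
  note base = this
  show ?case
  proof (rule exI[of _ "\<lambda>g. g"], rule exI[of _ "\<lambda>j. if j = 1 then 1 else 0"], intro conjI allI ballI)
    fix g assume "g \<in> W" then show "g \<in> W" .
  next
    fix g x
    show "g x = g x - R 1 g x + (\<Sum>j\<in>{0<..n}. (if j = 1 then 1 else 0) * R j g x)"
      unfolding base[of g x] by simp
  qed
next
  case (Suc k)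
  then obtain T d where TW: "\<forall>g\<in>W. T g \<in> W"
    and Tf: "\<forall>g. \<forall>x\<in>V. T g x = g x - R 1 g x + (\<Sum>j\<in>{k<..n}. d j * R j g x)" by auto
  define l where "l = lam (Suc k)"
  have lpos: "l > 0" unfolding l_def using Suc.prems by (intro lam_pos) auto
  define d' where "d' m = d m * (1 - lam m / l) - w m * (\<Sum>j\<in>{k<..<m}. d j) / l" for m
  define T' where "T' g x = T g x - Pop (T g) x / l" for g x
  have T'W: "\<forall>g\<in>W. T' g \<in> W"
  proof
    fix g assume g: "g \<in> W"
    have A: "T g \<in> W" using TW g by (rule bspec)
    have B: "Pop (T g) \<in> W" by (rule Pop_W[OF A])
    have "(\<lambda>x. T g x - Pop (T g) x / l) \<in> W" by (rule W_comb[OF A B])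
    moreover have "T' g = (\<lambda>x. T g x - Pop (T g) x / l)" by (rule ext) (simp only: T'_def)
    ultimately show "T' g \<in> W" by simp
  qed
  have T'f: "T' g x = g x - R 1 g x + (\<Sum>j\<in>{Suc k<..n}. d' j * R j g x)" if x: "x \<in> V" for g x
  proof -
    have "Pop (T g) x = Pop (\<lambda>z. g z - R 1 g z + (\<Sum>j\<in>{k<..n}. d j * R j g z)) x"
      using Tf by (intro Pop_cong) auto
    also have "\<dots> = Pop g x - Pop (R 1 g) x + (\<Sum>j\<in>{k<..n}. d j * Pop (R j g) x)"
      by (rule Pop_lin)
    also have "\<dots> = (\<Sum>j\<in>{k<..n}. d j * lam j * R j g x) + (\<Sum>i\<in>{k<..n}. w i * (\<Sum>j\<in>{k<..<i}. d j) * R i g x)"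
      by (rule PopT_expand[OF x])
    finally have PT: "Pop (T g) x = (\<Sum>j\<in>{k<..n}. d j * lam j * R j g x) + (\<Sum>i\<in>{k<..n}. w i * (\<Sum>j\<in>{k<..<i}. d j) * R i g x)" .
    have "T' g x = g x - R 1 g x + ((\<Sum>j\<in>{k<..n}. d j * R j g x) - Pop (T g) x / l)"
      unfolding T'_def using Tf x by simp
    also have "(\<Sum>j\<in>{k<..n}. d j * R j g x) - Pop (T g) x / l = (\<Sum>j\<in>{k<..n}. d' j * R j g x)"
      unfolding PT d'_def by (rule coef_alg) (use lpos in simp)
    also have "{k<..n} = insert (Suc k) {Suc k<..n}" using Suc.prems by auto
    also have "(\<Sum>j\<in>insert (Suc k) {Suc k<..n}. d' j * R j g x) = (\<Sum>j\<in>{Suc k<..n}. d' j * R j g x)"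
    proof -
      have e: "{k<..<Suc k} = {}" by auto
      have "d' (Suc k) = 0" unfolding d'_def e using lpos l_def by simp
      then show ?thesis by simp
    qed
    finally show ?thesis .
  qed
  show ?case
  proof (rule exI[of _ T'], rule exI[of _ d'], intro conjI allI ballI)
    fix g assume "g \<in> W" then show "T' g \<in> W" using T'W by blast
  next
    fix g x assume "x \<in> V" then show "T' g x = g x - R 1 g x + (\<Sum>j\<in>{Suc k<..n}. d' j * R j g x)"
      by (rule T'f)
  qed
qed

lemma R1_W:
  assumes g: "g \<in> W" shows "R 1 g \<in> W"
proof -
  obtain T d where TW: "\<forall>g\<in>W. T g \<in> W"
    and Tf: "\<forall>g. \<forall>x\<in>V. T g x = g x - R 1 g x + (\<Sum>j\<in>{n<..n}. d j * R j g x)"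
    using T_ex[of n] by auto
  have e: "\<And>x. x \<in> V \<Longrightarrow> R 1 g x = g x - T g x" using Tf by simp
  show ?thesis unfolding W_def
  proof (intro CollectI ballI)
    fix L x y assume L: "L \<in> P" "x \<in> L" "y \<in> L"
    then have "x \<in> V" "y \<in> V" using P_sub by auto
    moreover have "g x = g y" using g L unfolding W_def by blast
    moreover have "T g \<in> W" using TW g by blast
    then have "T g x = T g y" using L unfolding W_def by blast
    ultimately show "R 1 g x = R 1 g y" using e by simp
  qed
qed

lemma incl:
  assumes Li: "Li \<in> P" and Lj: "Lj \<in> P" and x: "x \<in> Li" and y: "y \<in> Lj"
    and xy: "butlast x = butlast y"
  shows "butlast ` Li \<subseteq> butlast ` Lj"
proof
  fix v assume "v \<in> butlast ` Li"
  then obtain x' where x': "x' \<in> Li" and v: "v = butlast x'" by auto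
  define f where "f z = (if z \<in> Lj then 1 else (0::real))" for z
  have fW: "f \<in> W" unfolding W_def
  proof (intro CollectI ballI)
    fix L a b assume L: "L \<in> P" "a \<in> L" "b \<in> L"
    show "f a = f b"
    proof (cases "L = Lj")
      case True then show ?thesis using L by (simp add: f_def)
    next
      case False
      then have "L \<inter> Lj = {}" using P_disj L(1) Lj by blast
      then have "a \<notin> Lj" "b \<notin> Lj" using L by auto
      then show ?thesis by (simp add: f_def)
    qed
  qed
  have RW: "R 1 f \<in> W" by (rule R1_W[OF fW])
  have xV: "x \<in> V" and yV: "y \<in> V" and x'V: "x' \<in> V" using P_sub Li Lj x y x' by auto
  have bt: "\<And>z. z \<in> V \<Longrightarrow> take (n - 1) z = butlast z"
    using lenV by (simp add: butlast_conv_take)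
  define F where "F u z = (if take (n - 1) z = take (n - 1) u then f z else 0)" for u z
  have Fnn: "\<And>u z. 0 \<le> F u z" unfolding F_def f_def by simp
  have "F x y = 1" unfolding F_def using bt[OF xV] bt[OF yV] xy y by (simp add: f_def)
  moreover have "F x y \<le> (\<Sum>z\<in>V. F x z)"
    by (rule member_le_sum[OF yV _ finV]) (rule Fnn)
  ultimately have S1: "(\<Sum>z\<in>V. F x z) > 0" by linarith
  have RF: "\<And>u. R 1 f u = (\<Sum>z\<in>V. F u z) / real q ^ 1" unfolding R_def F_def by simp
  have "R 1 f x > 0" unfolding RF using S1 qpos by (intro divide_pos_pos) auto
  moreover have "R 1 f x' = R 1 f x"
  proof -
    have "\<forall>L\<in>P. \<forall>a\<in>L. \<forall>b\<in>L. R 1 f a = R 1 f b" using RW unfolding W_def by (rule CollectD)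
    then show ?thesis using Li x x' by blast
  qed
  ultimately have "(\<Sum>z\<in>V. F x' z) \<noteq> 0" unfolding RF by auto
  then have "\<not> (\<forall>z\<in>V. F x' z = 0)" using sum.neutral[of V "F x'"] by blast
  then obtain z where zV: "z \<in> V" and Fz: "F x' z \<noteq> 0" by blast
  have z2: "take (n - 1) z = take (n - 1) x'" and fz: "f z \<noteq> 0"
    using Fz unfolding F_def by (auto split: if_splits)
  have zL: "z \<in> Lj" using fz unfolding f_def by (cases "z \<in> Lj") auto
  have "butlast z = take (n - 1) z" using bt[OF zV] by (rule sym)
  also have "\<dots> = take (n - 1) x'" by (rule z2)
  also have "\<dots> = butlast x'" by (rule bt[OF x'V])
  finally have "butlast z = v" using v by simp
  then show "v \<in> butlast ` Lj" using zL by blast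
qed

end
theorem lemma13:
  fixes q n :: nat and P :: "nat list set set"
  assumes "q \<ge> 2" and "n \<ge> 2"
    and "partition_on (words q n) P"
    and "insect_lumpable q n P"
    and "Li \<in> P" and "Lj \<in> P"
    and "butlast ` Li \<inter> butlast ` Lj \<noteq> {}"
  shows "butlast ` Li = butlast ` Lj"
proof -
  interpret ins q n P using assms(1-4) by unfold_locales
  obtain x y where x: "x \<in> Li" and y: "y \<in> Lj" and xy: "butlast x = butlast y"
    using assms(7) by auto
  show ?thesis
    using incl[OF assms(5,6) x y xy] incl[OF assms(6,5) y x xy[symmetric]] by blast
qed

end
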